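(* Let $N\ge 2$, $Z=\{1,\dots,N\}$, $p\in\mathbb R$, $K<N$, and let $Z$ be partitioned into consecutive blocks (clusters) $\tilde Z_1,\dots,\tilde Z_K$ with $N_k=|\tilde Z_k|$. Let $W_0=(w^{(0)}_{ij})$ be symmetric with $w^{(0)}_{ij}\ge0$ if $i\ne j$ lie in the same cluster and $w^{(0)}_{ij}=0$ if $i=j$ or $i,j$ lie in different clusters, so $W_0=\mathrm{diag}(\tilde W_1,\dots,\tilde W_K)$. Let $\tilde D_k$ be the degree matrix of $\tilde W_k$, $\tilde L_k=\tilde D_k^{-p}(\tilde D_k-\tilde W_k)\tilde D_k^{-p}$, and assume there is $\theta>0$ such that $\langle\mathbf x,\tilde L_k\mathbf x\rangle\ge\theta\langle\mathbf x,\mathbf x\rangle$ for every $k$ and every $\mathbf x\in\mathbb R^{N_k}$ with $\mathbf x\perp\tilde D_k^p\mathbf 1_k$ ($\mathbf 1_k$ the vector of ones in $\mathbb R^{N_k}$). Let $D_0=\mathrm{diag}(d^{(0)}_i)$ be the degree matrix of $W_0$, $L_0=D_0^{-p}(D_0-W_0)D_0^{-p}$ and, for $\tau^2,\alpha>0$, $C_{\tau,0}=\tau^{2\alpha}(L_0+\tau^2I)^{-\alpha}$, with $j$-th column $\mathbf c_{j,0}$. Define $(\pmb\chi_k)_j=(d^{(0)}_j)^p$ if $j\in\tilde Z_k$ and $0$ otherwise, and $\bar{\pmb\chi}_k=\pmb\chi_k/\|\pmb\chi_k\|$. Then, as $\tau\downarrow0$, $$\big\|\mathbf c_{j,0}-(\bar{\pmb\chi}_k)_j\bar{\pmb\chi}_k\big\|^2\le\Xi\,\tau^{4\alpha}\qquad\forall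 j\in\tilde Z_k,$$ where $\Xi>0$ is a uniform constant.
   Context: The degrees of $W_0$ are positive (guaranteed by the spectral gap assumption, which excludes isolated nodes), so $D_0^{-p}$ is defined. Norms and inner products are Euclidean. *)

theory Defs
  imports "HOL-Analysis.Analysis"
begin

text \<open>Matrices on a finite index set S of naturals are functions nat => nat => real
(only entries with indices in S matter); vectors are functions nat => real.\<close>

definition vinner :: "nat set \<Rightarrow> (nat \<Rightarrow> real) \<Rightarrow> (nat \<Rightarrow> real) \<Rightarrow> real" where
  "vinner S x y = (\<Sum>i\<in>S. x i * y i)"

definition vnorm :: "nat set \<Rightarrow> (nat \<Rightarrow> real) \<Rightarrow> real" where
  "vnorm S x = sqrt (vinner S x x)"

definition mulv :: "nat set \<Rightarrow> (nat \<Rightarrow> nat \<Rightarrow> real) \<Rightarrow> (nat \<Rightarrow> real) \<Rightarrow> (nat \<Rightarrow> real)" where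
  "mulv S A x = (\<lambda>i. \<Sum>j\<in>S. A i j * x j)"

definition degree :: "nat set \<Rightarrow> (nat \<Rightarrow> nat \<Rightarrow> real) \<Rightarrow> nat \<Rightarrow> real" where
  "degree S W i = (\<Sum>j\<in>S. W i j)"

definition laplacian :: "real \<Rightarrow> nat set \<Rightarrow> (nat \<Rightarrow> nat \<Rightarrow> real) \<Rightarrow> nat \<Rightarrow> nat \<Rightarrow> real" where
  "laplacian p S W = (\<lambda>i j. if i \<in> S \<and> j \<in> S then
      degree S W i powr (-p) * ((if i = j then degree S W i else 0) - W i j) * degree S W j powr (-p)
    else 0)"

definition spectral_decomp :: "nat set \<Rightarrow> (nat \<Rightarrow> nat \<Rightarrow> real) \<Rightarrow> (nat \<Rightarrow> nat \<Rightarrow> real) \<Rightarrow> (nat \<Rightarrow> real) \<Rightarrow> bool" where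
  "spectral_decomp S A U lam \<longleftrightarrow>
     (\<forall>k\<in>S. \<forall>l\<in>S. (\<Sum>i\<in>S. U i k * U i l) = (if k = l then 1 else 0)) \<and>
     (\<forall>i\<in>S. \<forall>j\<in>S. A i j = (\<Sum>k\<in>S. lam k * U i k * U j k))"

definition mat_powr :: "nat set \<Rightarrow> (nat \<Rightarrow> nat \<Rightarrow> real) \<Rightarrow> real \<Rightarrow> nat \<Rightarrow> nat \<Rightarrow> real" where
  "mat_powr S A s = (SOME B. \<exists>U lam. spectral_decomp S A U lam \<and>
      B = (\<lambda>i j. if i \<in> S \<and> j \<in> S then (\<Sum>k\<in>S. lam k powr s * U i k * U j k) else 0))"

end

theory Submission
  imports Defs
begin


lemma vinner_sym: "vinner S x y = vinner S y x" unfolding vinner_def by (simp add: mult.commute)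

lemma vinner_nonneg: "vinner S x x \<ge> 0" unfolding vinner_def by (simp add: sum_nonneg)

lemma vinner_zero_iff:
  assumes "finite S" shows "vinner S x x = 0 \<longleftrightarrow> (\<forall>i\<in>S. x i = 0)"
  unfolding vinner_def using assms by (simp add: sum_nonneg_eq_0_iff)

lemma mulv_sym:
  assumes "\<forall>i\<in>S. \<forall>j\<in>S. A i j = A j i"
  shows "vinner S x (mulv S A y) = vinner S (mulv S A x) y"
proof -
  have "vinner S x (mulv S A y) = (\<Sum>i\<in>S. \<Sum>j\<in>S. x i * A i j * y j)"
    unfolding vinner_def mulv_def by (simp add: sum_distrib_left mult.assoc)
  also have "... = (\<Sum>j\<in>S. \<Sum>i\<in>S. x i * A i j * y j)" by (rule sum.swap)
  also have "... = vinner S (mulv S A x) y"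
    unfolding vinner_def mulv_def using assms
    by (auto simp: sum_distrib_right sum_distrib_left mult.commute intro!: sum.cong)
  finally show ?thesis .
qed

definition orthon :: "nat set \<Rightarrow> nat set \<Rightarrow> (nat \<Rightarrow> nat \<Rightarrow> real) \<Rightarrow> bool" where
  "orthon S T u \<longleftrightarrow> (\<forall>k\<in>T. \<forall>l\<in>T. vinner S (u k) (u l) = (if k = l then 1 else 0))"

definition resid :: "nat set \<Rightarrow> (nat \<Rightarrow> nat \<Rightarrow> real) \<Rightarrow> nat \<Rightarrow> nat \<Rightarrow> real" where
  "resid T u i = (\<lambda>l. (if l = i then 1 else 0) - (\<Sum>k\<in>T. u k i * u k l))"

lemma vinner_resid:
  assumes "finite S" "finite T" "i \<in> S"
  shows "vinner S y (resid T u i) = y i - (\<Sum>k\<in>T. u k i * vinner S y (u k))"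
proof -
  have "vinner S y (resid T u i) = (\<Sum>l\<in>S. y l * (if l = i then 1 else 0)) - (\<Sum>l\<in>S. \<Sum>k\<in>T. u k i * (y l * u k l))"
    unfolding vinner_def resid_def
    by (simp add: right_diff_distrib sum_subtractf sum_distrib_left mult.commute mult.left_commute)
  also have "(\<Sum>l\<in>S. y l * (if l = i then 1 else 0)) = y i"
    using assms by (simp add: if_distrib[of "\<lambda>t. _ * t"] cong: if_cong)
  also have "(\<Sum>l\<in>S. \<Sum>k\<in>T. u k i * (y l * u k l)) = (\<Sum>k\<in>T. u k i * vinner S y (u k))"
    unfolding vinner_def by (subst sum.swap) (simp add: sum_distrib_left)
  finally show ?thesis .
qed

lemma resid_orth:
  assumes "finite S" "finite T" "i \<in> S" "orthon S T u" "m \<in> T"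
  shows "vinner S (u m) (resid T u i) = 0"
proof -
  have "(\<Sum>k\<in>T. u k i * vinner S (u m) (u k)) = (\<Sum>k\<in>T. if k = m then u m i else 0)"
    using assms(4,5) unfolding orthon_def by (intro sum.cong) auto
  also have "... = u m i" using assms by simp
  finally show ?thesis using vinner_resid[OF assms(1-3)] by simp
qed

lemma resid_norm:
  assumes "finite S" "finite T" "i \<in> S" "orthon S T u"
  shows "vinner S (resid T u i) (resid T u i) = 1 - (\<Sum>k\<in>T. (u k i)\<^sup>2)"
proof -
  have "vinner S (resid T u i) (resid T u i) = resid T u i i - (\<Sum>k\<in>T. u k i * vinner S (resid T u i) (u k))"
    by (rule vinner_resid[OF assms(1-3)])
  also have "(\<Sum>k\<in>T. u k i * vinner S (resid T u i) (u k)) = 0"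
    using resid_orth[OF assms] by (simp add: vinner_sym[of S "resid T u i"])
  finally show ?thesis unfolding resid_def by (simp add: power2_eq_square)
qed

lemma trace_sum:
  assumes "finite S" "finite T" "orthon S T u"
  shows "(\<Sum>i\<in>S. vinner S (resid T u i) (resid T u i)) = real (card S) - real (card T)"
proof -
  have "(\<Sum>i\<in>S. vinner S (resid T u i) (resid T u i)) = (\<Sum>i\<in>S. 1 - (\<Sum>k\<in>T. (u k i)\<^sup>2))"
    using resid_norm[OF assms(1,2) _ assms(3)] by simp
  also have "... = real (card S) - (\<Sum>k\<in>T. \<Sum>i\<in>S. (u k i)\<^sup>2)"
    by (simp add: sum_subtractf sum.swap[of _ S])
  also have "(\<Sum>k\<in>T. \<Sum>i\<in>S. (u k i)\<^sup>2) = (\<Sum>k\<in>T. 1)"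
    using assms(3) unfolding orthon_def vinner_def by (intro sum.cong) (auto simp: power2_eq_square)
  finally show ?thesis by simp
qed

lemma vinner_restr_left:
  "vinner S (\<lambda>i. if i \<in> S then c * x i else 0) y = c * vinner S x y"
  unfolding vinner_def by (simp add: sum_distrib_left mult.assoc)

lemma vinner_restr_right:
  "vinner S y (\<lambda>i. if i \<in> S then c * x i else 0) = c * vinner S y x"
  unfolding vinner_def by (simp add: sum_distrib_left mult.left_commute)

lemma mulv_restr:
  "mulv S A (\<lambda>i. if i \<in> S then c * x i else 0) = (\<lambda>j. c * mulv S A x j)"
  unfolding mulv_def by (simp add: sum_distrib_left mult.left_commute)

lemma mulv_add:
  "mulv S A (\<lambda>i. x i + t * y i) = (\<lambda>j. mulv S A x j + t * mulv S A y j)"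
  unfolding mulv_def by (simp add: distrib_left sum.distrib sum_distrib_left mult.left_commute)

lemma vinner_add_left:
  "vinner S (\<lambda>i. x i + t * y i) z = vinner S x z + t * vinner S y z"
  unfolding vinner_def by (simp add: distrib_right sum.distrib sum_distrib_left mult.assoc)

lemma vinner_add_right:
  "vinner S z (\<lambda>i. x i + t * y i) = vinner S z x + t * vinner S z y"
  unfolding vinner_def by (simp add: distrib_left sum.distrib sum_distrib_left mult.left_commute)

lemma vinner_cong_right:
  "(\<And>i. i \<in> S \<Longrightarrow> y i = y' i) \<Longrightarrow> vinner S x y = vinner S x y'"
  unfolding vinner_def by simp

lemma exists_unit_orth:
  assumes "finite S" "finite T" "orthon S T u" "card T < card S"
  shows "\<exists>x. vinner S x x = 1 \<and> (\<forall>k\<in>T. vinner S (u k) x = 0) \<and> (\<forall>i. i \<notin> S \<longrightarrow> x i = 0)"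
proof -
  have "\<exists>i\<in>S. vinner S (resid T u i) (resid T u i) > 0"
  proof (rule ccontr)
    assume "\<not> ?thesis"
    hence "\<forall>i\<in>S. vinner S (resid T u i) (resid T u i) = 0"
      using vinner_nonneg by (meson antisym not_less)
    hence "(\<Sum>i\<in>S. vinner S (resid T u i) (resid T u i)) = 0" by simp
    with trace_sum[OF assms(1-3)] assms(4) show False by simp
  qed
  then obtain i where i: "i \<in> S" and pos: "vinner S (resid T u i) (resid T u i) > 0" by blast
  define n where "n = sqrt (vinner S (resid T u i) (resid T u i))"
  have n: "n > 0" "n * n = vinner S (resid T u i) (resid T u i)"
    using pos unfolding n_def by (auto simp del: real_sqrt_mult_self simp: real_sqrt_mult_self)
  define x where "x = (\<lambda>l. if l \<in> S then (1 / n) * resid T u i l else 0)"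
  have "vinner S x x = (1/n) * (1/n) * vinner S (resid T u i) (resid T u i)"
    unfolding x_def vinner_restr_left vinner_restr_right by simp
  also have "... = 1" using n pos by (simp add: field_simps)
  finally have 1: "vinner S x x = 1" .
  have 2: "\<forall>k\<in>T. vinner S (u k) x = 0"
    unfolding x_def vinner_restr_right using resid_orth[OF assms(1,2) i assms(3)] by simp
  show ?thesis using 1 2 unfolding x_def by auto
qed

lemma quad_nonpos_lin_zero:
  fixes b c :: real
  assumes "\<forall>t. 2 * t * b + t\<^sup>2 * c \<le> 0"
  shows "b = 0"
proof (rule ccontr)
  assume bn: "b \<noteq> 0"
  define s where "s = 1 / (\<bar>c\<bar> + 1)"
  have s: "s > 0" "s * \<bar>c\<bar> < 1" unfolding s_def by (auto simp: field_simps)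
  have "2 * (s*b) * b + (s*b)\<^sup>2 * c \<le> 0" using assms by blast
  hence "b\<^sup>2 * (s * (2 + s * c)) \<le> 0" by (simp add: power2_eq_square algebra_simps)
  moreover have "s * (2 + s * c) > 0"
  proof -
    have "s * c \<ge> - (s * \<bar>c\<bar>)" using mult_left_mono[of "-\<bar>c\<bar>" c s] s by simp
    hence "2 + s * c > 0" using s by linarith
    thus ?thesis using s by simp
  qed
  moreover have "b\<^sup>2 > 0" using bn by simp
  ultimately show False by (meson mult_pos_pos not_less)
qed

lemma sq_le_vinner:
  assumes "finite S" "i \<in> S" shows "(x i)\<^sup>2 \<le> vinner S x x"
  unfolding vinner_def using assms
  by (metis (no_types, lifting) power2_eq_square sum_nonneg_leq_bound zero_le_square order_refl)

lemma max_eig: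
  assumes fin: "finite S" and sym: "\<forall>i\<in>S. \<forall>j\<in>S. A i j = A j i" and finT: "finite T"
    and on: "orthon S T u" and eig: "\<forall>k\<in>T. \<forall>i\<in>S. mulv S A (u k) i = lam k * u k i"
    and card: "card T < card S"
  shows "\<exists>x \<mu>. vinner S x x = 1 \<and> (\<forall>k\<in>T. vinner S (u k) x = 0) \<and> (\<forall>i\<in>S. mulv S A x i = \<mu> * x i)"
proof -
  define box where "box = (PiE UNIV (\<lambda>i. if i \<in> S then {-1..1::real} else {0}))"
  define X where "X = box \<inter> {x. vinner S x x = 1} \<inter> (\<Inter>k\<in>T. {x. vinner S (u k) x = 0})"
  define f where "f = (\<lambda>x. vinner S x (mulv S A x))"
  have cbox: "compact box"
  proof -
    have "compactin (product_topology (\<lambda>i. euclidean) UNIV) box"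
      unfolding box_def by (subst compactin_PiE) auto
    thus ?thesis by (simp add: euclidean_product_topology)
  qed
  have cl1: "closed {x::nat\<Rightarrow>real. vinner S x x = 1}"
    unfolding vinner_def by (intro closed_Collect_eq continuous_intros continuous_on_product_coordinates)
  have cl2: "closed {x::nat\<Rightarrow>real. vinner S (u k) x = 0}" for k
    unfolding vinner_def by (intro closed_Collect_eq continuous_intros continuous_on_product_coordinates)
  have cX: "compact X" unfolding X_def using cbox cl1 cl2 by (intro compact_Int_closed closed_INT) auto
  obtain x0 where x0: "vinner S x0 x0 = 1" "\<forall>k\<in>T. vinner S (u k) x0 = 0" "\<forall>i. i \<notin> S \<longrightarrow> x0 i = 0"
    using exists_unit_orth[OF fin finT on card] by blast
  have inbox: "x \<in> box" if "vinner S x x = 1" "\<forall>i. i \<notin> S \<longrightarrow> x i = 0" for x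
  proof -
    have "x i \<in> {-1..1}" if "i \<in> S" for i
    proof -
      have "(x i)\<^sup>2 \<le> 1\<^sup>2" using sq_le_vinner[OF fin that, of x] \<open>vinner S x x = 1\<close> by simp
      hence "\<bar>x i\<bar> \<le> 1" using abs_le_square_iff by (metis abs_one)
      thus ?thesis by auto
    qed
    thus ?thesis unfolding box_def using that by (auto simp: PiE_UNIV_domain)
  qed
  have "x0 \<in> X" unfolding X_def using x0 inbox by auto
  hence ne: "X \<noteq> {}" by auto
  have cf: "continuous_on X f"
    unfolding f_def vinner_def mulv_def
    by (intro continuous_intros continuous_on_subset[OF continuous_on_product_coordinates]) auto
  obtain xm where xm: "xm \<in> X" and mx: "\<forall>y\<in>X. f y \<le> f xm"
    using continuous_attains_sup[OF cX ne cf] by blast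
  define \<mu> where "\<mu> = f xm"
  have xm1: "vinner S xm xm = 1" and xm2: "\<forall>k\<in>T. vinner S (u k) xm = 0" using xm unfolding X_def by auto
  have key: "vinner S y (mulv S A xm) = \<mu> * vinner S y xm"
    if y: "\<forall>k\<in>T. vinner S (u k) y = 0" for y
  proof -
    define b where "b = vinner S y (mulv S A xm) - \<mu> * vinner S y xm"
    define c where "c = vinner S y (mulv S A y) - \<mu> * vinner S y y"
    have "2 * t * b + t\<^sup>2 * c \<le> 0" for t
    proof -
      define z where "z = (\<lambda>i. xm i + t * y i)"
      have fz: "f z = \<mu> + 2 * t * vinner S y (mulv S A xm) + t\<^sup>2 * vinner S y (mulv S A y)"
      proof -
        have h1: "vinner S xm (mulv S A y) = vinner S y (mulv S A xm)"
          using mulv_sym[OF sym, of xm y] vinner_sym[of S y "mulv S A xm"] by simp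
        show ?thesis
          unfolding f_def z_def mulv_add vinner_add_left vinner_add_right \<mu>_def h1
          by (simp add: power2_eq_square algebra_simps)
      qed
      have nz: "vinner S z z = 1 + 2 * t * vinner S y xm + t\<^sup>2 * vinner S y y"
        unfolding z_def vinner_add_left vinner_add_right using xm1
        by (simp add: vinner_sym[of S xm y] power2_eq_square algebra_simps)
      have "f z \<le> \<mu> * vinner S z z"
      proof (cases "vinner S z z = 0")
        case True
        hence "\<forall>i\<in>S. z i = 0" using vinner_zero_iff[OF fin] by blast
        hence "f z = 0" unfolding f_def vinner_def by simp
        thus ?thesis using True by simp
      next
        case False
        hence pos: "vinner S z z > 0" using vinner_nonneg[of S z] by simp
        define n where "n = sqrt (vinner S z z)"
        have n: "n > 0" "n * n = vinner S z z" using pos unfolding n_def by auto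
        define w where "w = (\<lambda>i. if i \<in> S then (1/n) * z i else 0)"
        have w1: "vinner S w w = 1" unfolding w_def vinner_restr_left vinner_restr_right
          using n pos by (simp add: field_simps)
        have w2: "\<forall>k\<in>T. vinner S (u k) w = 0" unfolding w_def vinner_restr_right z_def vinner_add_right
          using xm2 y by simp
        have "w \<in> X" unfolding X_def using w1 w2 inbox[of w] by (auto simp: w_def)
        hence "f w \<le> \<mu>" using mx \<mu>_def by simp
        moreover have "f w = (1/n) * (1/n) * f z"
          unfolding f_def w_def mulv_restr vinner_restr_left
          by (simp add: vinner_def sum_distrib_left mult_ac)
        ultimately have "(1/n) * (1/n) * f z \<le> \<mu>" by simp
        hence "f z \<le> \<mu> * (n * n)" using n pos by (simp add: field_simps)
        thus ?thesis using n by simp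
      qed
      thus ?thesis unfolding fz nz b_def c_def by (simp add: algebra_simps)
    qed
    hence "b = 0" by (intro quad_nonpos_lin_zero) blast
    thus ?thesis unfolding b_def by simp
  qed
  define y where "y = (\<lambda>i. mulv S A xm i - \<mu> * xm i)"
  have yorth: "\<forall>k\<in>T. vinner S (u k) y = 0"
  proof
    fix k assume k: "k \<in> T"
    have "vinner S (u k) (mulv S A xm) = vinner S (mulv S A (u k)) xm" by (rule mulv_sym[OF sym])
    also have "... = vinner S xm (\<lambda>i. lam k * u k i)"
      by (subst vinner_sym) (rule vinner_cong_right, use eig k in auto)
    also have "... = lam k * vinner S (u k) xm" unfolding vinner_def
      by (simp add: sum_distrib_left mult_ac)
    finally show "vinner S (u k) y = 0" unfolding y_def
      using xm2 k vinner_add_right[of S "u k" "mulv S A xm" "-\<mu>" xm] by simp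
  qed
  have "vinner S y y = vinner S y (mulv S A xm) - \<mu> * vinner S y xm"
    using vinner_add_right[of S y "mulv S A xm" "-\<mu>" xm] unfolding y_def[symmetric]
    by (simp add: y_def)
  also have "... = 0" using key[OF yorth] by simp
  finally have "\<forall>i\<in>S. y i = 0" using vinner_zero_iff[OF fin] by blast
  hence "\<forall>i\<in>S. mulv S A xm i = \<mu> * xm i" unfolding y_def by simp
  thus ?thesis using xm1 xm2 by blast
qed

lemma eig_family:
  assumes fin: "finite S" and sym: "\<forall>i\<in>S. \<forall>j\<in>S. A i j = A j i" and F: "F \<subseteq> S"
  shows "\<exists>u lam. orthon S F u \<and> (\<forall>k\<in>F. \<forall>i\<in>S. mulv S A (u k) i = lam k * u k i)"
proof -
  have "finite F" using F fin finite_subset by blast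
  thus ?thesis using F
  proof (induction rule: finite_subset_induct')
    case empty
    show ?case unfolding orthon_def by auto
  next
    case (insert a F)
    then obtain u lam where on: "orthon S F u" and eig: "\<forall>k\<in>F. \<forall>i\<in>S. mulv S A (u k) i = lam k * u k i"
      by blast
    have "F \<subset> S" using insert by auto
    hence card: "card F < card S" using fin psubset_card_mono by blast
    obtain x \<mu> where x: "vinner S x x = 1" "\<forall>k\<in>F. vinner S (u k) x = 0" "\<forall>i\<in>S. mulv S A x i = \<mu> * x i"
      using max_eig[OF fin sym insert(1) on eig card] by blast
    define u' where "u' = u(a := x)"
    define lam' where "lam' = lam(a := \<mu>)"
    have "orthon S (insert a F) u'"
      unfolding orthon_def
    proof (intro ballI)
      fix k l assume k: "k \<in> insert a F" and l: "l \<in> insert a F"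
      show "vinner S (u' k) (u' l) = (if k = l then 1 else 0)"
      proof -
        have "\<forall>k\<in>F. vinner S x (u k) = 0" using x(2) vinner_sym[of S x] by simp
        thus ?thesis using k l x on insert(4) unfolding u'_def orthon_def by auto
      qed
    qed
    moreover have "\<forall>k\<in>insert a F. \<forall>i\<in>S. mulv S A (u' k) i = lam' k * u' k i"
      using eig x insert(4) unfolding u'_def lam'_def by auto
    ultimately show ?case by blast
  qed
qed

lemma spectral_exists:
  assumes fin: "finite S" and sym: "\<forall>i\<in>S. \<forall>j\<in>S. A i j = A j i"
  shows "\<exists>U lam. spectral_decomp S A U lam"
proof -
  obtain u lam where on: "orthon S S u" and eig: "\<forall>k\<in>S. \<forall>i\<in>S. mulv S A (u k) i = lam k * u k i"
    using eig_family[OF fin sym order_refl] by blast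
  have "(\<Sum>i\<in>S. vinner S (resid S u i) (resid S u i)) = 0"
    using trace_sum[OF fin fin on] by simp
  hence "\<forall>i\<in>S. vinner S (resid S u i) (resid S u i) = 0"
    using fin by (simp add: sum_nonneg_eq_0_iff vinner_nonneg)
  hence comp: "\<forall>i\<in>S. \<forall>l\<in>S. (\<Sum>k\<in>S. u k i * u k l) = (if l = i then 1 else 0)"
    using vinner_zero_iff[OF fin] unfolding resid_def by fastforce
  define U where "U = (\<lambda>i k. u k i)"
  have 1: "\<forall>k\<in>S. \<forall>l\<in>S. (\<Sum>i\<in>S. U i k * U i l) = (if k = l then 1 else 0)"
    using on unfolding orthon_def vinner_def U_def by auto
  have 2: "A i j = (\<Sum>k\<in>S. lam k * U i k * U j k)" if i: "i \<in> S" and j: "j \<in> S" for i j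
  proof -
    have "A i j = (\<Sum>l\<in>S. A i l * (if l = j then 1 else 0))"
      using fin j by (simp add: if_distrib[of "\<lambda>t. _ * t"] cong: if_cong)
    also have "... = (\<Sum>l\<in>S. A i l * (\<Sum>k\<in>S. u k j * u k l))"
      using comp j by (intro sum.cong) auto
    also have "... = (\<Sum>k\<in>S. u k j * (\<Sum>l\<in>S. A i l * u k l))"
      by (simp add: sum_distrib_left mult_ac) (rule sum.swap)
    also have "... = (\<Sum>k\<in>S. u k j * mulv S A (u k) i)" unfolding mulv_def by simp
    also have "... = (\<Sum>k\<in>S. lam k * U i k * U j k)"
      using eig i unfolding U_def by (intro sum.cong) auto
    finally show ?thesis .
  qed
  show ?thesis unfolding spectral_decomp_def using 1 2 by blast
qed

lemma vinner_sum_right: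
  "vinner S x (\<lambda>i. \<Sum>k\<in>K. c k * v k i) = (\<Sum>k\<in>K. c k * vinner S x (v k))"
  unfolding vinner_def by (simp add: sum_distrib_left mult_ac) (rule sum.swap)

lemma vinner_sum_left:
  "vinner S (\<lambda>i. \<Sum>k\<in>K. c k * v k i) x = (\<Sum>k\<in>K. c k * vinner S (v k) x)"
  using vinner_sum_right[of S x c v K] by (simp add: vinner_sym)

lemma mulv_sum:
  "mulv S M (\<lambda>i. \<Sum>k\<in>K. c k * v k i) j = (\<Sum>k\<in>K. c k * mulv S M (v k) j)"
  unfolding mulv_def by (simp add: sum_distrib_left mult_ac) (rule sum.swap)

lemma vinner_diff_right: "vinner S x (\<lambda>i. y i - z i) = vinner S x y - vinner S x z"
  unfolding vinner_def by (simp add: right_diff_distrib sum_subtractf)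

lemma vinner_diff_left: "vinner S (\<lambda>i. y i - z i) x = vinner S y x - vinner S z x"
  unfolding vinner_def by (simp add: left_diff_distrib sum_subtractf)

lemma complete:
  assumes fin: "finite S" and on: "orthon S S u"
  shows "\<forall>i\<in>S. \<forall>l\<in>S. (\<Sum>k\<in>S. u k i * u k l) = (if l = i then 1 else 0)"
proof -
  have "(\<Sum>i\<in>S. vinner S (resid S u i) (resid S u i)) = 0"
    using trace_sum[OF fin fin on] by simp
  hence "\<forall>i\<in>S. vinner S (resid S u i) (resid S u i) = 0"
    using fin by (simp add: sum_nonneg_eq_0_iff vinner_nonneg)
  thus ?thesis
    using vinner_zero_iff[OF fin] unfolding resid_def by fastforce
qed

lemma orthon_expand:
  assumes fin: "finite S" and on: "orthon S S u"
  shows "vinner S (\<lambda>i. \<Sum>m\<in>S. c m * u m i) (\<lambda>i. \<Sum>m\<in>S. c m * u m i) = (\<Sum>m\<in>S. (c m)\<^sup>2)"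
proof -
  have "vinner S (\<lambda>i. \<Sum>m\<in>S. c m * u m i) (\<lambda>i. \<Sum>m\<in>S. c m * u m i)
      = (\<Sum>m\<in>S. c m * (\<Sum>m'\<in>S. c m' * vinner S (u m) (u m')))"
    unfolding vinner_sum_left vinner_sum_right ..
  also have "... = (\<Sum>m\<in>S. c m * c m)"
  proof (rule sum.cong[OF refl])
    fix m assume m: "m \<in> S"
    have "(\<Sum>m'\<in>S. c m' * vinner S (u m) (u m')) = (\<Sum>m'\<in>S. if m' = m then c m else 0)"
      using on m unfolding orthon_def by (intro sum.cong) auto
    also have "... = c m" using fin m by simp
    finally show "c m * (\<Sum>m'\<in>S. c m' * vinner S (u m) (u m')) = c m * c m" by simp
  qed
  finally show ?thesis by (simp add: power2_eq_square)
qed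



lemma core:
  fixes \<theta> \<alpha> \<tau> :: real
  assumes fin: "finite S" and sym: "\<forall>i\<in>S. \<forall>j\<in>S. M i j = M j i"
    and finK: "finite Ks" and on: "orthon S Ks ch"
    and Mch: "\<forall>k\<in>Ks. \<forall>i\<in>S. mulv S M (ch k) i = 0"
    and gap: "\<forall>x. (\<forall>k\<in>Ks. vinner S (ch k) x = 0) \<longrightarrow> vinner S x (mulv S M x) \<ge> \<theta> * vinner S x x"
    and th: "\<theta> > 0" and al: "\<alpha> > 0" and ta: "\<tau> > 0" and j: "j \<in> S"
  shows "(vnorm S (\<lambda>i. \<tau> powr (2 * \<alpha>) * mat_powr S (\<lambda>i j. M i j + (if i = j then \<tau>\<^sup>2 else 0)) (- \<alpha>) i j
            - (\<Sum>k\<in>Ks. ch k j * ch k i)))\<^sup>2 \<le> \<theta> powr (- 2 * \<alpha>) * \<tau> powr (4 * \<alpha>)"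
proof -
  define A where "A = (\<lambda>i j. M i j + (if i = j then \<tau>\<^sup>2 else (0::real)))"
  have symA: "\<forall>i\<in>S. \<forall>j\<in>S. A i j = A j i" using sym unfolding A_def by auto
  have "\<exists>B. \<exists>U lam. spectral_decomp S A U lam \<and>
      B = (\<lambda>i j. if i \<in> S \<and> j \<in> S then (\<Sum>k\<in>S. lam k powr (-\<alpha>) * U i k * U j k) else 0)"
    using spectral_exists[OF fin symA] by blast
  hence "\<exists>U lam. spectral_decomp S A U lam \<and> mat_powr S A (-\<alpha>) =
      (\<lambda>i j. if i \<in> S \<and> j \<in> S then (\<Sum>k\<in>S. lam k powr (-\<alpha>) * U i k * U j k) else 0)"
    unfolding mat_powr_def by (rule someI_ex)
  then obtain U lam where sd: "spectral_decomp S A U lam" and B: "mat_powr S A (-\<alpha>) =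
      (\<lambda>i j. if i \<in> S \<and> j \<in> S then (\<Sum>k\<in>S. lam k powr (-\<alpha>) * U i k * U j k) else 0)" by blast
  define u where "u = (\<lambda>m i. U i m)"
  have onu: "orthon S S u" using sd unfolding spectral_decomp_def orthon_def vinner_def u_def by auto
  have comp: "\<forall>i\<in>S. \<forall>l\<in>S. (\<Sum>k\<in>S. u k i * u k l) = (if l = i then 1 else 0)"
    by (rule complete[OF fin onu])
  have Au: "mulv S A (u m) i = lam m * u m i" if m: "m \<in> S" and i: "i \<in> S" for m i
  proof -
    have "mulv S A (u m) i = (\<Sum>l\<in>S. (\<Sum>k\<in>S. lam k * U i k * U l k) * U l m)"
      unfolding mulv_def u_def using sd i unfolding spectral_decomp_def by (intro sum.cong) auto
    also have "... = (\<Sum>k\<in>S. lam k * U i k * (\<Sum>l\<in>S. U l k * U l m))"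
      by (simp add: sum_distrib_left sum_distrib_right mult_ac) (rule sum.swap)
    also have "... = (\<Sum>k\<in>S. if k = m then lam m * U i m else 0)"
      using sd m unfolding spectral_decomp_def by (intro sum.cong) auto
    also have "... = lam m * u m i" using fin m unfolding u_def by simp
    finally show ?thesis .
  qed
  have AM: "mulv S A x i = mulv S M x i + \<tau>\<^sup>2 * x i" if i: "i \<in> S" for x i
  proof -
    have "mulv S A x i = mulv S M x i + (\<Sum>l\<in>S. (if i = l then \<tau>\<^sup>2 else 0) * x l)"
      unfolding mulv_def A_def by (simp add: distrib_right sum.distrib)
    also have "(\<Sum>l\<in>S. (if i = l then \<tau>\<^sup>2 else 0) * x l) = \<tau>\<^sup>2 * x i"
      using fin i by (simp add: if_distrib[of "\<lambda>t. t * _"] cong: if_cong)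
    finally show ?thesis .
  qed
  have Mu: "mulv S M (u m) i = (lam m - \<tau>\<^sup>2) * u m i" if "m \<in> S" "i \<in> S" for m i
    using Au[OF that] AM[OF that(2)] by (simp add: algebra_simps)
  define P where "P = (\<lambda>x i. \<Sum>k\<in>Ks. vinner S (ch k) x * ch k i)"
  have chM: "vinner S (ch k) (mulv S M x) = 0" if k: "k \<in> Ks" for k x
  proof -
    have "vinner S (ch k) (mulv S M x) = vinner S (mulv S M (ch k)) x" by (rule mulv_sym[OF sym])
    also have "... = 0" unfolding vinner_def using Mch k by simp
    finally show ?thesis .
  qed
  have perp: "vinner S (ch k) (\<lambda>i. x i - P x i) = 0" if k: "k \<in> Ks" for k x
  proof -
    have "vinner S (ch k) (P x) = (\<Sum>l\<in>Ks. vinner S (ch l) x * vinner S (ch k) (ch l))"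
      unfolding P_def by (rule vinner_sum_right)
    also have "... = (\<Sum>l\<in>Ks. if l = k then vinner S (ch k) x else 0)"
      using on k unfolding orthon_def by (intro sum.cong) auto
    also have "... = vinner S (ch k) x" using finK k by simp
    finally show ?thesis by (simp add: vinner_diff_right)
  qed
  have quad: "vinner S x (mulv S M x) \<ge> \<theta> * vinner S (\<lambda>i. x i - P x i) (\<lambda>i. x i - P x i)" for x
  proof -
    have MP: "mulv S M (P x) i = 0" if "i \<in> S" for i
      unfolding P_def mulv_sum using Mch that by simp
    have "mulv S M (\<lambda>i. x i - P x i) i = mulv S M x i" if "i \<in> S" for i
      using MP[OF that] unfolding mulv_def by (simp add: right_diff_distrib sum_subtractf)
    hence "vinner S (\<lambda>i. x i - P x i) (mulv S M (\<lambda>i. x i - P x i))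
        = vinner S (\<lambda>i. x i - P x i) (mulv S M x)" by (intro vinner_cong_right) auto
    also have "... = vinner S x (mulv S M x) - vinner S (P x) (mulv S M x)"
      by (rule vinner_diff_left)
    also have "vinner S (P x) (mulv S M x) = 0"
      unfolding P_def vinner_sum_left using chM by simp
    finally have "vinner S (\<lambda>i. x i - P x i) (mulv S M (\<lambda>i. x i - P x i)) = vinner S x (mulv S M x)"
      by simp
    moreover have "vinner S (\<lambda>i. x i - P x i) (mulv S M (\<lambda>i. x i - P x i))
       \<ge> \<theta> * vinner S (\<lambda>i. x i - P x i) (\<lambda>i. x i - P x i)"
      using gap perp by blast
    ultimately show ?thesis by simp
  qed
  have uu: "vinner S (u m) (u m) = 1" if "m \<in> S" for m using onu that unfolding orthon_def by auto
  have eigcase: "(lam m = \<tau>\<^sup>2 \<and> (\<forall>i\<in>S. P (u m) i = u m i)) \<or>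
                 (lam m \<ge> \<theta> + \<tau>\<^sup>2 \<and> (\<forall>i\<in>S. P (u m) i = 0))" if m: "m \<in> S" for m
  proof -
    have vMu: "vinner S y (mulv S M (u m)) = (lam m - \<tau>\<^sup>2) * vinner S y (u m)" for y
      unfolding vinner_def using Mu[OF m] by (simp add: sum_distrib_left mult_ac)
    show ?thesis
    proof (cases "lam m = \<tau>\<^sup>2")
      case True
      hence "vinner S (u m) (mulv S M (u m)) = 0" using vMu by simp
      hence "\<theta> * vinner S (\<lambda>i. u m i - P (u m) i) (\<lambda>i. u m i - P (u m) i) \<le> 0" using quad by metis
      hence "vinner S (\<lambda>i. u m i - P (u m) i) (\<lambda>i. u m i - P (u m) i) = 0"
        using th vinner_nonneg by (metis antisym mult_le_0_iff not_less)
      hence "\<forall>i\<in>S. P (u m) i = u m i" using vinner_zero_iff[OF fin] by fastforce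
      thus ?thesis using True by blast
    next
      case False
      have o: "vinner S (ch k) (u m) = 0" if k: "k \<in> Ks" for k
        using chM[OF k, of "u m"] vMu[of "ch k"] False by simp
      hence "vinner S (u m) (mulv S M (u m)) \<ge> \<theta> * vinner S (u m) (u m)" using gap by blast
      hence "lam m - \<tau>\<^sup>2 \<ge> \<theta>" using vMu[of "u m"] uu[OF m] by simp
      moreover have "\<forall>i\<in>S. P (u m) i = 0" unfolding P_def using o by simp
      ultimately show ?thesis by auto
    qed
  qed
  define G where "G = \<tau> powr (2 * \<alpha>) * \<theta> powr (- \<alpha>)"
  define g where "g = (\<lambda>m. \<tau> powr (2 * \<alpha>) * lam m powr (- \<alpha>) - (if lam m = \<tau>\<^sup>2 then 1 else 0))"
  have gb: "(g m)\<^sup>2 \<le> G\<^sup>2" if m: "m \<in> S" for m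
  proof (cases "lam m = \<tau>\<^sup>2")
    case True
    have "\<tau> powr (2 * \<alpha>) * (\<tau>\<^sup>2) powr (- \<alpha>) = 1"
    proof -
      have "(\<tau>\<^sup>2) powr (- \<alpha>) = \<tau> powr (- 2 * \<alpha>)"
      proof -
        have "\<tau>\<^sup>2 = \<tau> powr 2" using ta by simp
        hence "(\<tau>\<^sup>2) powr (- \<alpha>) = \<tau> powr (2 * (- \<alpha>))" by (simp only: powr_powr)
        thus ?thesis by simp
      qed
      thus ?thesis using ta by (simp add: powr_add[symmetric])
    qed
    thus ?thesis unfolding g_def using True by simp
  next
    case False
    hence l: "lam m \<ge> \<theta> + \<tau>\<^sup>2" using eigcase[OF m] by blast
    have "lam m powr (- \<alpha>) \<le> \<theta> powr (- \<alpha>)"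
    proof -
      have "\<theta> \<le> lam m" using l zero_le_power2[of \<tau>] by linarith
      thus ?thesis using th al by (intro powr_mono2') auto
    qed
    moreover have "lam m powr (- \<alpha>) \<ge> 0" by simp
    ultimately have "0 \<le> g m" "g m \<le> G" unfolding g_def G_def using False
      by (auto intro: mult_left_mono)
    thus ?thesis by (simp add: power_mono)
  qed
  have col: "\<tau> powr (2 * \<alpha>) * mat_powr S A (- \<alpha>) i j - (\<Sum>k\<in>Ks. ch k j * ch k i)
           = (\<Sum>m\<in>S. (g m * u m j) * u m i)" if i: "i \<in> S" for i
  proof -
    have chj: "ch k j = (\<Sum>m\<in>S. u m j * vinner S (ch k) (u m))" for k
    proof -
      have "(\<Sum>m\<in>S. u m j * vinner S (ch k) (u m)) = (\<Sum>l\<in>S. ch k l * (\<Sum>m\<in>S. u m j * u m l))"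
        unfolding vinner_def by (simp add: sum_distrib_left mult_ac) (rule sum.swap)
      also have "... = (\<Sum>l\<in>S. ch k l * (if l = j then 1 else 0))"
        using comp j by (intro sum.cong) auto
      also have "... = ch k j" using fin j by (simp add: if_distrib[of "\<lambda>t. _ * t"] cong: if_cong)
      finally show ?thesis by simp
    qed
    have "(\<Sum>k\<in>Ks. ch k j * ch k i) = (\<Sum>k\<in>Ks. \<Sum>m\<in>S. u m j * vinner S (ch k) (u m) * ch k i)"
      unfolding chj by (simp add: sum_distrib_right)
    also have "... = (\<Sum>m\<in>S. u m j * P (u m) i)"
      unfolding P_def by (subst sum.swap) (simp add: sum_distrib_left mult_ac)
    also have "... = (\<Sum>m\<in>S. u m j * (if lam m = \<tau>\<^sup>2 then u m i else 0))"
    proof (rule sum.cong[OF refl])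
      fix m assume m: "m \<in> S"
      show "u m j * P (u m) i = u m j * (if lam m = \<tau>\<^sup>2 then u m i else 0)"
        using eigcase[OF m] i ta th
        by (cases "lam m = \<tau>\<^sup>2") (auto simp: add_pos_pos)
    qed
    finally have e1: "(\<Sum>k\<in>Ks. ch k j * ch k i) = (\<Sum>m\<in>S. u m j * (if lam m = \<tau>\<^sup>2 then u m i else 0))" .
    have e2: "\<tau> powr (2 * \<alpha>) * mat_powr S A (- \<alpha>) i j
         = (\<Sum>m\<in>S. \<tau> powr (2 * \<alpha>) * lam m powr (-\<alpha>) * u m j * u m i)"
      unfolding B u_def using i j by (simp add: sum_distrib_left mult_ac)
    show ?thesis unfolding e1 e2 g_def
      by (simp add: sum_subtractf[symmetric] algebra_simps) (intro sum.cong, auto)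
  qed
  define v where "v = (\<lambda>i. \<tau> powr (2 * \<alpha>) * mat_powr S A (- \<alpha>) i j - (\<Sum>k\<in>Ks. ch k j * ch k i))"
  have "vinner S v v = vinner S (\<lambda>i. \<Sum>m\<in>S. (g m * u m j) * u m i) (\<lambda>i. \<Sum>m\<in>S. (g m * u m j) * u m i)"
    unfolding vinner_def v_def using col by simp
  also have "... = (\<Sum>m\<in>S. (g m * u m j)\<^sup>2)" by (rule orthon_expand[OF fin onu])
  also have "... \<le> (\<Sum>m\<in>S. G\<^sup>2 * (u m j)\<^sup>2)"
    using gb by (intro sum_mono) (simp add: power_mult_distrib mult_right_mono)
  also have "... = G\<^sup>2" using comp j by (simp add: sum_distrib_left[symmetric] power2_eq_square)
  also have "G\<^sup>2 = \<theta> powr (- 2 * \<alpha>) * \<tau> powr (4 * \<alpha>)"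
    unfolding G_def by (simp add: power2_eq_square powr_add[symmetric] mult_ac)
  finally have "vinner S v v \<le> \<theta> powr (- 2 * \<alpha>) * \<tau> powr (4 * \<alpha>)" .
  moreover have "(vnorm S v)\<^sup>2 = vinner S v v" unfolding vnorm_def using vinner_nonneg by simp
  ultimately show ?thesis unfolding v_def A_def by simp
qed



theorem proposition2p9:
  fixes N K :: nat and b :: "nat \<Rightarrow> nat" and p \<theta> \<alpha> :: real
    and W :: "nat \<Rightarrow> nat \<Rightarrow> real"
  defines "Z \<equiv> {1..N}"
  defines "blk \<equiv> (\<lambda>k. {b (k - 1) + 1 .. b k})"
  defines "cl \<equiv> (\<lambda>i. THE k. k \<in> {1..K} \<and> i \<in> blk k)"
  defines "d \<equiv> degree Z W"
  defines "L0 \<equiv> laplacian p Z W"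
  defines "C \<equiv> (\<lambda>\<tau>::real. \<lambda>i j. \<tau> powr (2 * \<alpha>) *
             mat_powr Z (\<lambda>i j. L0 i j + (if i = j then \<tau>\<^sup>2 else 0)) (- \<alpha>) i j)"
  defines "chi \<equiv> (\<lambda>k j. if j \<in> blk k then d j powr p else 0)"
  defines "chib \<equiv> (\<lambda>k j. chi k j / vnorm Z (chi k))"
  assumes "N \<ge> 2" and "K < N" and "1 \<le> K"
    and "b 0 = 0" and "b K = N" and "\<forall>k\<in>{1..K}. b (k - 1) < b k"
    and "\<forall>i\<in>Z. \<forall>j\<in>Z. W i j = W j i"
    and "\<forall>i\<in>Z. \<forall>j\<in>Z. i \<noteq> j \<and> cl i = cl j \<longrightarrow> W i j \<ge> 0"
    and "\<forall>i\<in>Z. \<forall>j\<in>Z. i = j \<or> cl i \<noteq> cl j \<longrightarrow> W i j = 0"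
    and "\<theta> > 0"
    and "\<forall>k\<in>{1..K}. \<forall>x. vinner (blk k) x
            (mulv (blk k) (\<lambda>i j. (degree (blk k) W i) powr p * (if i = j then 1 else 0))
                  (\<lambda>_. 1)) = 0
           \<longrightarrow> vinner (blk k) x (mulv (blk k) (laplacian p (blk k) W) x) \<ge> \<theta> * vinner (blk k) x x"
    and "\<alpha> > 0"
  shows "\<exists>\<Xi>>0. \<forall>\<^sub>F \<tau> in at_right 0. \<forall>k\<in>{1..K}. \<forall>j\<in>blk k.
           (vnorm Z (\<lambda>i. C \<tau> i j - chib k j * chib k i))\<^sup>2 \<le> \<Xi> * \<tau> powr (4 * \<alpha>)"
proof -
  have Zd: "Z = {1..N}" using \<open>Z \<equiv> {1..N}\<close> by simp
  have blkd: "\<And>k. blk k = {b (k - 1) + 1 .. b k}" using \<open>blk \<equiv> (\<lambda>k. {b (k - 1) + 1 .. b k})\<close> by simp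
  have cld: "\<And>i. cl i = (THE k. k \<in> {1..K} \<and> i \<in> blk k)"
    using \<open>cl \<equiv> (\<lambda>i. THE k. k \<in> {1..K} \<and> i \<in> blk k)\<close> by simp
  have dd: "d = degree Z W" using \<open>d \<equiv> degree Z W\<close> by simp
  have L0d: "L0 = laplacian p Z W" using \<open>L0 \<equiv> laplacian p Z W\<close> by simp
  have Cd: "\<And>\<tau> i j. C \<tau> i j = \<tau> powr (2 * \<alpha>) *
             mat_powr Z (\<lambda>i j. L0 i j + (if i = j then \<tau>\<^sup>2 else 0)) (- \<alpha>) i j"
    using \<open>C \<equiv> (\<lambda>\<tau>::real. \<lambda>i j. \<tau> powr (2 * \<alpha>) *
             mat_powr Z (\<lambda>i j. L0 i j + (if i = j then \<tau>\<^sup>2 else 0)) (- \<alpha>) i j)\<close> by simp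
  have chid: "\<And>k j. chi k j = (if j \<in> blk k then d j powr p else 0)"
    using \<open>chi \<equiv> (\<lambda>k j. if j \<in> blk k then d j powr p else 0)\<close> by simp
  have chibd: "\<And>k j. chib k j = chi k j / vnorm Z (chi k)"
    using \<open>chib \<equiv> (\<lambda>k j. chi k j / vnorm Z (chi k))\<close> by simp
  note b0 = assms(12) and bK = assms(13) and bstr = assms(14) and Wsym = assms(15)
    and Wnn0 = assms(16) and Wz0 = assms(17) and th = assms(18) and gapk = assms(19) and al = assms(20)
  have finZ: "finite Z" unfolding Zd by simp
  have mono: "b m \<le> b n" if "m \<le> n" "n \<le> K" for m n
    using that
  proof (induction n)
    case 0 thus ?case by simp
  next
    case (Suc n)
    show ?case
    proof (cases "m = Suc n")
      case True thus ?thesis by simp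
    next
      case False
      hence "b m \<le> b n" using Suc.IH \<open>m \<le> Suc n\<close> \<open>Suc n \<le> K\<close> by simp
      moreover have "b (Suc n - 1) < b (Suc n)" using bstr \<open>Suc n \<le> K\<close> by (intro bstr[rule_format]) auto
      hence "b n < b (Suc n)" by simp
      ultimately show ?thesis by simp
    qed
  qed
  have blkZ: "blk k \<subseteq> Z" if "k \<in> {1..K}" for k
    using mono[of k K] that bK unfolding blkd Zd by auto
  have disj: "k = k'" if "k \<in> {1..K}" "k' \<in> {1..K}" "i \<in> blk k" "i \<in> blk k'" for k k' i
  proof (rule ccontr)
    assume "k \<noteq> k'"
    hence "k < k' \<or> k' < k" by auto
    thus False
    proof
      assume "k < k'"
      hence "b k \<le> b (k' - 1)" using mono[of k "k' - 1"] that by auto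
      moreover have "i \<le> b k" "b (k' - 1) + 1 \<le> i" using that(3,4) unfolding blkd by auto
      ultimately show False by linarith
    next
      assume "k' < k"
      hence "b k' \<le> b (k - 1)" using mono[of k' "k - 1"] that by auto
      moreover have "i \<le> b k'" "b (k - 1) + 1 \<le> i" using that(3,4) unfolding blkd by auto
      ultimately show False by linarith
    qed
  qed
  have cover: "\<exists>k\<in>{1..K}. i \<in> blk k" if i: "i \<in> Z" for i
  proof -
    define k where "k = (LEAST k. i \<le> b k)"
    have ex: "i \<le> b K" using i bK unfolding Zd by auto
    have k1: "i \<le> b k" unfolding k_def by (rule LeastI[of _ K]) (rule ex)
    have k2: "k \<le> K" unfolding k_def by (rule Least_le) (rule ex)
    have k0: "k \<noteq> 0"
    proof
      assume "k = 0" with k1 b0 i show False unfolding Zd by simp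
    qed
    have "\<not> i \<le> b (k - 1)" unfolding k_def by (rule not_less_Least) (use k0 in \<open>simp add: k_def\<close>)
    hence "i \<in> blk k" using k1 unfolding blkd by auto
    thus ?thesis using k0 k2 by auto
  qed
  have clk: "cl i = k" if "k \<in> {1..K}" "i \<in> blk k" for k i
    unfolding cld using that disj by (intro the_equality) auto
  have Woff: "W i j = 0" if asm: "k \<in> {1..K}" "i \<in> blk k" "j \<in> Z" "j \<notin> blk k" for k i j
  proof -
    obtain k' where k': "k' \<in> {1..K}" "j \<in> blk k'" using cover[OF asm(3)] by blast
    have "cl j = k'" "cl i = k" using clk k' asm by auto
    moreover have "k \<noteq> k'" using k' asm by auto
    moreover have "i \<in> Z" using blkZ asm by auto
    ultimately show ?thesis using Wz0 asm by blast
  qed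
  have Wnn: "W i j \<ge> 0" if asm: "k \<in> {1..K}" "i \<in> blk k" "j \<in> blk k" for k i j
  proof (cases "i = j")
    case True
    have "j \<in> Z" using asm blkZ by blast
    thus ?thesis using Wz0 True by simp
  next
    case False
    have "cl i = cl j" using clk asm by simp
    thus ?thesis using Wnn0 False asm blkZ by blast
  qed
  have deg: "d i = degree (blk k) W i" if asm: "k \<in> {1..K}" "i \<in> blk k" for k i
  proof -
    have "d i = (\<Sum>j\<in>Z - blk k. W i j) + (\<Sum>j\<in>blk k. W i j)"
      unfolding dd degree_def using blkZ[OF asm(1)] finZ by (rule sum.subset_diff)
    also have "(\<Sum>j\<in>Z - blk k. W i j) = 0" using Woff asm by (intro sum.neutral) auto
    finally show ?thesis unfolding degree_def by simp
  qed
  have dnn: "d i \<ge> 0" if asm: "k \<in> {1..K}" "i \<in> blk k" for k i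
    unfolding deg[OF asm] degree_def using Wnn asm by (intro sum_nonneg) auto
  have vdelta: "vinner S (\<lambda>l. if l = i then 1 else 0) y = y i" if "finite S" "i \<in> S" for S y i
    unfolding vinner_def using that by (simp add: if_distrib[of "\<lambda>t. t * _"] cong: if_cong)
  have finblk: "finite (blk k)" for k unfolding blkd by simp
  have mulvD: "mulv (blk k) (\<lambda>i j. (degree (blk k) W i) powr p * (if i = j then 1 else 0)) (\<lambda>_. 1) a
      = d a powr p" if asm: "k \<in> {1..K}" "a \<in> blk k" for k a
    unfolding mulv_def deg[OF asm] using finblk[of k] asm
    by (simp add: if_distrib[of "\<lambda>t. _ * t"] cong: if_cong)
  have dpos: "d i > 0" if asm: "k \<in> {1..K}" "i \<in> blk k" for k i
  proof (rule ccontr)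
    assume "\<not> d i > 0"
    hence d0: "d i = 0" using dnn[OF asm] by simp
    define x where "x = (\<lambda>l. if l = i then 1 else (0::real))"
    have "vinner (blk k) x (mulv (blk k) (\<lambda>i j. (degree (blk k) W i) powr p * (if i = j then 1 else 0)) (\<lambda>_. 1)) = 0"
      unfolding x_def vdelta[OF finblk asm(2)] mulvD[OF asm] d0 by simp
    hence "vinner (blk k) x (mulv (blk k) (laplacian p (blk k) W) x) \<ge> \<theta> * vinner (blk k) x x"
      using gapk asm by blast
    moreover have "vinner (blk k) x x = 1" unfolding x_def vdelta[OF finblk asm(2)] by simp
    moreover have "vinner (blk k) x (mulv (blk k) (laplacian p (blk k) W) x) = 0"
    proof -
      have "vinner (blk k) x (mulv (blk k) (laplacian p (blk k) W) x) = mulv (blk k) (laplacian p (blk k) W) x i"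
        unfolding x_def by (rule vdelta[OF finblk asm(2)])
      also have "... = laplacian p (blk k) W i i"
        unfolding mulv_def x_def using finblk[of k] asm by (simp add: if_distrib[of "\<lambda>t. _ * t"] cong: if_cong)
      also have "... = 0" unfolding laplacian_def using d0 deg[OF asm] by simp
      finally show ?thesis .
    qed
    ultimately show False using th by simp
  qed
  have inZ: "i \<in> Z" if "k \<in> {1..K}" "i \<in> blk k" for k i using blkZ that by blast
  have L0blk: "L0 i j = laplacian p (blk k) W i j" if asm: "k \<in> {1..K}" "i \<in> blk k" "j \<in> blk k" for k i j
    unfolding L0d laplacian_def using asm inZ deg[of k i] deg[of k j] unfolding dd by simp
  have L0off: "L0 i j = 0" if asm: "k \<in> {1..K}" "i \<in> blk k" "j \<in> Z" "j \<notin> blk k" for k i j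
  proof -
    have "i \<noteq> j" using asm by auto
    thus ?thesis unfolding L0d laplacian_def using Woff[OF asm] by simp
  qed
  have symL0: "\<forall>i\<in>Z. \<forall>j\<in>Z. L0 i j = L0 j i"
    unfolding L0d laplacian_def using Wsym by (auto simp: mult_ac)
  define nk where "nk = (\<lambda>k. vnorm Z (chi k))"
  have vchi: "vinner Z (chi k) y = (\<Sum>a\<in>blk k. d a powr p * y a)" if k: "k \<in> {1..K}" for k y
  proof -
    have "vinner Z (chi k) y = (\<Sum>a\<in>Z. if a \<in> blk k then d a powr p * y a else 0)"
      unfolding vinner_def chid by (intro sum.cong) auto
    also have "... = (\<Sum>a\<in>Z \<inter> blk k. d a powr p * y a)" using finZ by (simp add: sum.inter_restrict)
    also have "Z \<inter> blk k = blk k" using blkZ[OF k] by blast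
    finally show ?thesis .
  qed
  have nkpos: "nk k > 0" if k: "k \<in> {1..K}" for k
  proof -
    have "b (k - 1) < b k" using bstr k by blast
    hence bk: "b k \<in> blk k" unfolding blkd by auto
    have "(chi k (b k))\<^sup>2 \<le> vinner Z (chi k) (chi k)" using sq_le_vinner[OF finZ inZ[OF k bk]] .
    moreover have "chi k (b k) > 0" unfolding chid using bk dpos[OF k bk] by simp
    ultimately have "vinner Z (chi k) (chi k) > 0" by (smt (verit) zero_less_power)
    thus ?thesis unfolding nk_def vnorm_def by simp
  qed
  have nksq: "nk k * nk k = vinner Z (chi k) (chi k)" for k
    unfolding nk_def vnorm_def using vinner_nonneg by simp
  have chib2: "chib k = (\<lambda>j. chi k j / nk k)" for k unfolding nk_def using chibd by auto
  have vchib: "vinner Z (chib k) y = vinner Z (chi k) y / nk k" for k y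
    unfolding chib2 vinner_def by (simp add: sum_divide_distrib)
  have onch: "orthon Z {1..K} chib"
    unfolding orthon_def
  proof (intro ballI)
    fix k l assume k: "k \<in> {1..K}" and l: "l \<in> {1..K}"
    have e: "vinner Z (chib k) (chib l) = vinner Z (chi k) (chi l) / (nk k * nk l)"
      unfolding vchib unfolding chib2 vinner_def by (simp add: sum_divide_distrib mult.commute)
    show "vinner Z (chib k) (chib l) = (if k = l then 1 else 0)"
    proof (cases "k = l")
      case True
      have "vinner Z (chi k) (chi k) \<noteq> 0" using nksq[of k] nkpos[OF k] by (metis mult_pos_pos less_irrefl)
      thus ?thesis using True e nksq[of k] by simp
    next
      case False
      have "vinner Z (chi k) (chi l) = 0" unfolding vinner_def chid
        using disj[OF k l] False by (intro sum.neutral) auto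
      thus ?thesis using e False by simp
    qed
  qed
  have Mchi: "mulv Z L0 (chi k) i = 0" if k: "k \<in> {1..K}" and i: "i \<in> Z" for k i
  proof -
    have "mulv Z L0 (chi k) i = (\<Sum>j\<in>Z. if j \<in> blk k then L0 i j * d j powr p else 0)"
      unfolding mulv_def chid by (intro sum.cong) auto
    also have "... = (\<Sum>j\<in>Z \<inter> blk k. L0 i j * d j powr p)" using finZ by (simp add: sum.inter_restrict)
    also have "Z \<inter> blk k = blk k" using blkZ[OF k] by blast
    also have "(\<Sum>j\<in>blk k. L0 i j * d j powr p) = (\<Sum>j\<in>blk k. d i powr (-p) * ((if i = j then d i else 0) - W i j))"
    proof (rule sum.cong[OF refl])
      fix j assume j: "j \<in> blk k"
      have "d j powr (-p) * d j powr p = 1" using dpos[OF k j] by (simp add: powr_add[symmetric])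
      thus "L0 i j * d j powr p = d i powr (-p) * ((if i = j then d i else 0) - W i j)"
        unfolding L0d laplacian_def using i inZ[OF k j] unfolding dd[symmetric]
        by (simp add: mult_ac)
    qed
    also have "... = d i powr (-p) * ((\<Sum>j\<in>blk k. (if i = j then d i else 0)) - (\<Sum>j\<in>blk k. W i j))"
      by (simp add: sum_distrib_left[symmetric] sum_subtractf)
    also have "(\<Sum>j\<in>blk k. (if i = j then d i else 0)) - (\<Sum>j\<in>blk k. W i j) = 0"
    proof (cases "i \<in> blk k")
      case True thus ?thesis using deg[OF k True] finblk[of k] unfolding degree_def by simp
    next
      case False
      have "W i j = 0" if j: "j \<in> blk k" for j
        using Woff[OF k j i False] Wsym i inZ[OF k j] by simp
      moreover have "(\<Sum>j\<in>blk k. (if i = j then d i else 0)) = 0"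
        using False by (intro sum.neutral) auto
      ultimately show ?thesis by simp
    qed
    finally show ?thesis by simp
  qed
  have Mch: "\<forall>k\<in>{1..K}. \<forall>i\<in>Z. mulv Z L0 (chib k) i = 0"
    unfolding chib2 mulv_def using Mchi unfolding mulv_def by (simp add: sum_divide_distrib[symmetric])
  have Zun: "Z = (\<Union>k\<in>{1..K}. blk k)" using blkZ cover by blast
  have gap: "\<forall>x. (\<forall>k\<in>{1..K}. vinner Z (chib k) x = 0) \<longrightarrow> vinner Z x (mulv Z L0 x) \<ge> \<theta> * vinner Z x x"
  proof (intro allI impI)
    fix x assume o: "\<forall>k\<in>{1..K}. vinner Z (chib k) x = 0"
    have Q: "vinner (blk k) x (mulv (blk k) (laplacian p (blk k) W) x) \<ge> \<theta> * vinner (blk k) x x"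
      if k: "k \<in> {1..K}" for k
    proof -
      have "vinner Z (chi k) x = 0" using o k vchib[of k x] nkpos[OF k] by simp
      moreover have "vinner (blk k) x (mulv (blk k) (\<lambda>i j. (degree (blk k) W i) powr p * (if i = j then 1 else 0)) (\<lambda>_. 1))
          = (\<Sum>a\<in>blk k. d a powr p * x a)"
        unfolding vinner_def using mulvD[OF k] by (intro sum.cong) (auto simp: mult.commute)
      ultimately have "vinner (blk k) x (mulv (blk k) (\<lambda>i j. (degree (blk k) W i) powr p * (if i = j then 1 else 0)) (\<lambda>_. 1)) = 0"
        using vchi[OF k, of x] by simp
      thus ?thesis using gapk k by blast
    qed
    have rowk: "mulv Z L0 x i = mulv (blk k) (laplacian p (blk k) W) x i" if k: "k \<in> {1..K}" and i: "i \<in> blk k" for k i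
    proof -
      have "mulv Z L0 x i = (\<Sum>j\<in>Z - blk k. L0 i j * x j) + (\<Sum>j\<in>blk k. L0 i j * x j)"
        unfolding mulv_def using blkZ[OF k] finZ by (rule sum.subset_diff)
      also have "(\<Sum>j\<in>Z - blk k. L0 i j * x j) = 0" using L0off[OF k i] by (intro sum.neutral) auto
      also have "(\<Sum>j\<in>blk k. L0 i j * x j) = mulv (blk k) (laplacian p (blk k) W) x i"
        unfolding mulv_def using L0blk[OF k i] by simp
      finally show ?thesis by simp
    qed
    have dj: "\<forall>k\<in>{1..K}. \<forall>l\<in>{1..K}. k \<noteq> l \<longrightarrow> blk k \<inter> blk l = {}" using disj by blast
    have "vinner Z x (mulv Z L0 x) = (\<Sum>k\<in>{1..K}. \<Sum>i\<in>blk k. x i * mulv Z L0 x i)"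
      unfolding vinner_def Zun by (rule sum.UNION_disjoint) (use finblk dj in auto)
    also have "... = (\<Sum>k\<in>{1..K}. vinner (blk k) x (mulv (blk k) (laplacian p (blk k) W) x))"
      unfolding vinner_def using rowk by simp
    also have "... \<ge> (\<Sum>k\<in>{1..K}. \<theta> * vinner (blk k) x x)" using Q by (intro sum_mono) auto
    also have "(\<Sum>k\<in>{1..K}. \<theta> * vinner (blk k) x x) = \<theta> * vinner Z x x"
      unfolding vinner_def Zun sum_distrib_left[symmetric]
      by (subst sum.UNION_disjoint) (use finblk dj in auto)
    finally show "vinner Z x (mulv Z L0 x) \<ge> \<theta> * vinner Z x x" .
  qed
  have finK: "finite {1..K}" by simp
  have bound: "(vnorm Z (\<lambda>i. C \<tau> i j - chib k j * chib k i))\<^sup>2 \<le> \<theta> powr (- 2 * \<alpha>) * \<tau> powr (4 * \<alpha>)"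
    if ta: "\<tau> > 0" and k: "k \<in> {1..K}" and j: "j \<in> blk k" for \<tau> k j
  proof -
    have sumk: "(\<Sum>k'\<in>{1..K}. chib k' j * chib k' i) = chib k j * chib k i" for i
    proof -
      have "(\<Sum>k'\<in>{1..K}. chib k' j * chib k' i) = (\<Sum>k'\<in>{1..K}. if k' = k then chib k j * chib k i else 0)"
      proof (rule sum.cong[OF refl])
        fix k' assume k': "k' \<in> {1..K}"
        show "chib k' j * chib k' i = (if k' = k then chib k j * chib k i else 0)"
        proof (cases "k' = k")
          case False
          hence "j \<notin> blk k'" using disj[OF k k' j] by auto
          thus ?thesis using False unfolding chib2 chid by simp
        qed simp
      qed
      also have "... = chib k j * chib k i" using k by simp
      finally show ?thesis .
    qed
    have "(vnorm Z (\<lambda>i. \<tau> powr (2 * \<alpha>) * mat_powr Z (\<lambda>i j. L0 i j + (if i = j then \<tau>\<^sup>2 else 0)) (- \<alpha>) i j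
            - (\<Sum>k'\<in>{1..K}. chib k' j * chib k' i)))\<^sup>2 \<le> \<theta> powr (- 2 * \<alpha>) * \<tau> powr (4 * \<alpha>)"
      by (rule core[OF finZ symL0 finK onch Mch gap th al ta inZ[OF k j]])
    thus ?thesis unfolding sumk Cd .
  qed
  show ?thesis
  proof (intro exI[of _ "\<theta> powr (- 2 * \<alpha>)"] conjI)
    show "\<theta> powr (- 2 * \<alpha>) > 0" using th by simp
    show "\<forall>\<^sub>F \<tau> in at_right 0. \<forall>k\<in>{1..K}. \<forall>j\<in>blk k.
           (vnorm Z (\<lambda>i. C \<tau> i j - chib k j * chib k i))\<^sup>2 \<le> \<theta> powr (- 2 * \<alpha>) * \<tau> powr (4 * \<alpha>)"
      using eventually_at_right_less[of "0::real"] by eventually_elim (use bound in blast)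
  qed
qed

end
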